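(* Let $m\ge1$ and consider a preferential (dynamic) attachment circuit of index $m$. For $0\le j\le n$ let $D^{(m)}_{n,j}$ be the degree (indegree plus outdegree, edges counted with multiplicity) of node $j$ at time $n$. Then for $n\ge j$ and every integer $d$, $$\mathbb{P}\bigl(D^{(m)}_{n,j}=d\bigr)=\bigl(d-m(1-\delta_{j,0})\bigr)!\sum_{\substack{b_1+\cdots+b_{n-j}=m(n-j+1-\delta_{j,0})-d\\ 0\le b_1\le\min\{m,(m+1)j\}}}\left(\prod_{r=1}^{n-j}\binom{m}{b_r}\right)\frac{\prod_{r=1}^{n-j}\bigl\langle (m+1)j+\sum_{\ell=1}^{r-1}b_\ell+r-1\bigr\rangle_{b_r}}{\prod_{r=0}^{n-j-1}\langle (m+1)(j+r)+1\rangle_m},$$ where the sum is over tuples $(b_1,\dots,b_{n-j})$ of nonnegative integers.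
   Context: Preferential (dynamic) attachment circuit of index $m\ge1$: at time $0$ there is a single node labeled $0$. At each time $n\ge1$ a new node labeled $n$ is added and $m$ parents are chosen for it one at a time, with replacement, among nodes $0,\dots,n-1$. Before the $(i+1)$-th choice ($i=0,\dots,m-1$), each existing node $v$ is chosen with probability $\frac{d_i(v)+1}{\sum_{x}(d_i(x)+1)}$, where $d_i(x)$ is the outdegree of $x$ in the current multigraph including the edges created by the first $i$ choices for node $n$; after each choice an edge from the chosen parent to node $n$ is immediately added (multi-edges allowed). $\langle x\rangle_s=x(x+1)\cdots(x+s-1)$ is the rising factorial, $\langle x\rangle_0=1$; $\delta_{j,0}$ is the Kronecker delta. *)

theory Defs
  imports "HOL-Probability.Probability"
begin

text \<open>State of the circuit: the outdegree function d :: nat \<Rightarrow> nat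
  (edges counted with multiplicity).\<close>

definition choose_parent :: "nat \<Rightarrow> (nat \<Rightarrow> nat) \<Rightarrow> nat pmf" where
  "choose_parent k d = pmf_of_multiset (\<Sum>v<k. replicate_mset (d v + 1) v)"

definition add_edge :: "nat \<Rightarrow> (nat \<Rightarrow> nat) \<Rightarrow> (nat \<Rightarrow> nat) pmf" where
  "add_edge k d = map_pmf (\<lambda>v. d(v := d v + 1)) (choose_parent k d)"

fun attach :: "nat \<Rightarrow> nat \<Rightarrow> (nat \<Rightarrow> nat) \<Rightarrow> (nat \<Rightarrow> nat) pmf" where
  "attach 0 k d = return_pmf d"
| "attach (Suc i) k d = bind_pmf (add_edge k d) (attach i k)"

text \<open>Distribution of the outdegree function at time n for the
  preferential attachment circuit of index m. At time n+1,
  node n+1 chooses m parents among nodes 0..n.\<close>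
fun pa_outdeg :: "nat \<Rightarrow> nat \<Rightarrow> (nat \<Rightarrow> nat) pmf" where
  "pa_outdeg m 0 = return_pmf (\<lambda>_. 0)"
| "pa_outdeg m (Suc n) = bind_pmf (pa_outdeg m n) (attach m (Suc n))"

text \<open>Degree (indegree + outdegree) of node j at time n:
  node j \<ge> 1 has indegree m, node 0 has indegree 0.\<close>
definition pa_degree :: "nat \<Rightarrow> nat \<Rightarrow> nat \<Rightarrow> int pmf" where
  "pa_degree m n j = map_pmf (\<lambda>d. int (d j) + (if j = 0 then 0 else int m)) (pa_outdeg m n)"

definition kdelta :: "nat \<Rightarrow> nat \<Rightarrow> int" where
  "kdelta a b = (if a = b then 1 else 0)"

end

theory Submission
  imports Defs
begin


fun urn :: "nat \<Rightarrow> nat \<Rightarrow> nat \<Rightarrow> nat pmf" where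
  "urn 0 W x = return_pmf x"
| "urn (Suc i) W x = bind_pmf (bernoulli_pmf ((real x + 1) / real W))
      (\<lambda>b. urn i (Suc W) (if b then Suc x else x))"

definition wt :: "nat \<Rightarrow> (nat \<Rightarrow> nat) \<Rightarrow> nat" where
  "wt k d = (\<Sum>v<k. d v + 1)"

lemma count_cpm: "count (\<Sum>v<(k::nat). replicate_mset (d v + 1) v) u = (if u < k then d u + 1 else 0)"
proof -
  have "count (\<Sum>v<k. replicate_mset (d v + 1) v) u = (\<Sum>v<k. if v = u then d v + 1 else 0)"
    unfolding count_sum by (intro sum.cong) (auto simp del: replicate_mset_Suc)
  also have "\<dots> = (if u < k then d u + 1 else 0)" by (simp only: sum.delta[OF finite_lessThan]) simp
  finally show ?thesis .
qed

lemma cp_mset_ne: "(k::nat) > 0 \<Longrightarrow> (\<Sum>v<k. replicate_mset (d v + 1) v) \<noteq> {#}"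
proof -
  assume "k > 0"
  hence "count (\<Sum>v<k. replicate_mset (d v + 1) v) 0 > 0"
    by (simp only: count_cpm) simp
  thus ?thesis by auto
qed

lemma set_choose_parent: "k > 0 \<Longrightarrow> set_pmf (choose_parent k d) = {..<k}"
proof -
  assume k: "k > 0"
  have "set_pmf (choose_parent k d) = set_mset (\<Sum>v<k. replicate_mset (d v + 1) v)"
    unfolding choose_parent_def using set_pmf_of_multiset[OF cp_mset_ne[OF k]] by blast
  also have "\<dots> = {..<k}"
  proof (intro set_eqI iffI)
    fix u assume "u \<in># (\<Sum>v<k. replicate_mset (d v + 1) v)"
    hence "count (\<Sum>v<k. replicate_mset (d v + 1) v) u \<noteq> 0" by simp
    thus "u \<in> {..<k}" unfolding count_cpm by (simp split: if_splits)
  next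
    fix u assume "u \<in> {..<k}"
    hence "count (\<Sum>v<k. replicate_mset (d v + 1) v) u \<noteq> 0" unfolding count_cpm by simp
    thus "u \<in># (\<Sum>v<k. replicate_mset (d v + 1) v)" by (meson count_inI)
  qed
  finally show ?thesis .
qed

lemma pmf_choose_parent: "k > 0 \<Longrightarrow> pmf (choose_parent k d) v = (if v < k then real (d v + 1) / real (wt k d) else 0)"
proof -
  assume k: "k > 0"
  have "pmf (choose_parent k d) v = count (\<Sum>v<k. replicate_mset (d v + 1) v) v / size (\<Sum>v<k. replicate_mset (d v + 1) v)"
    unfolding choose_parent_def using pmf_of_multiset[OF cp_mset_ne[OF k]] by blast
  also have "size (\<Sum>v<k. replicate_mset (d v + 1) v) = wt k d"
    unfolding wt_def size_multiset_sum size_replicate_mset ..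
  finally show ?thesis unfolding count_cpm by simp
qed

lemma choose_parent_bern:
  assumes "j < k"
  shows "map_pmf (\<lambda>v. v = j) (choose_parent k d) = bernoulli_pmf ((real (d j) + 1) / real (wt k d))"
proof -
  have k: "k > 0" using assms by auto
  have "d j + 1 \<le> wt k d" unfolding wt_def
    using member_le_sum[of j "{..<k}" "\<lambda>v. d v + 1"] assms by auto
  hence p1: "(real (d j) + 1) / real (wt k d) \<le> 1" by simp
  have p0: "0 \<le> (real (d j) + 1) / real (wt k d)" by simp
  have T: "pmf (map_pmf (\<lambda>v. v = j) (choose_parent k d)) True = (real (d j) + 1) / real (wt k d)"
  proof -
    have "(\<lambda>v. v = j) -` {True} = {j}" by auto
    thus ?thesis using pmf_choose_parent[OF k, of d j] assms by (simp add: pmf_map measure_pmf_single)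
  qed
  show ?thesis
  proof (rule pmf_eqI)
    fix b :: bool
    show "pmf (map_pmf (\<lambda>v. v = j) (choose_parent k d)) b = pmf (bernoulli_pmf ((real (d j) + 1) / real (wt k d))) b"
    proof (cases b)
      case True thus ?thesis using T p0 p1 by simp
    next
      case False
      have "pmf (map_pmf (\<lambda>v. v = j) (choose_parent k d)) False = 1 - pmf (map_pmf (\<lambda>v. v = j) (choose_parent k d)) True"
        using pmf_False_conv_True by blast
      thus ?thesis using T p0 p1 False by simp
    qed
  qed
qed

lemma wt_upd: "v < k \<Longrightarrow> wt k (d(v := Suc (d v))) = Suc (wt k d)"
proof -
  assume v: "v < k"
  have "wt k (d(v := Suc (d v))) = (\<Sum>u<k. (d u + 1) + (if u = v then 1 else 0))"
    unfolding wt_def by (intro sum.cong) auto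
  also have "\<dots> = wt k d + 1" unfolding wt_def sum.distrib using v by simp
  finally show ?thesis by simp
qed

lemma attach_marg:
  assumes "j < k"
  shows "map_pmf (\<lambda>d. d j) (attach i k d) = urn i (wt k d) (d j)"
  using assms
proof (induction i arbitrary: d)
  case 0 thus ?case by simp
next
  case (Suc i)
  have k: "k > 0" using Suc.prems by auto
  have "map_pmf (\<lambda>d. d j) (attach (Suc i) k d) = bind_pmf (add_edge k d) (\<lambda>d'. map_pmf (\<lambda>d. d j) (attach i k d'))"
    by (simp add: map_bind_pmf)
  also have "\<dots> = bind_pmf (choose_parent k d) (\<lambda>v. urn i (wt k (d(v := d v + 1))) ((d(v := d v + 1)) j))"
    unfolding add_edge_def bind_map_pmf using Suc by simp
  also have "\<dots> = bind_pmf (choose_parent k d) (\<lambda>v. urn i (Suc (wt k d)) (if v = j then Suc (d j) else d j))"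
    by (intro bind_pmf_cong refl) (auto simp: set_choose_parent[OF k] wt_upd)
  also have "\<dots> = bind_pmf (map_pmf (\<lambda>v. v = j) (choose_parent k d)) (\<lambda>b. urn i (Suc (wt k d)) (if b then Suc (d j) else d j))"
    by (simp add: bind_map_pmf)
  also have "\<dots> = urn (Suc i) (wt k d) (d j)"
    using choose_parent_bern[OF Suc.prems] by simp
  finally show ?case .
qed



lemma set_add_edge: "k > 0 \<Longrightarrow> d' \<in> set_pmf (add_edge k d) \<Longrightarrow> \<exists>v<k. d' = d(v := Suc (d v))"
  unfolding add_edge_def by (auto simp: set_choose_parent)

lemma attach_supp:
  assumes "k > 0" "d' \<in> set_pmf (attach i k d)"
  shows "(\<forall>v\<ge>k. d' v = d v) \<and> (\<Sum>v<k. d' v) = (\<Sum>v<k. d v) + i"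
  using assms(2)
proof (induction i arbitrary: d)
  case 0 thus ?case by simp
next
  case (Suc i)
  from Suc.prems obtain d1 where d1: "d1 \<in> set_pmf (add_edge k d)" "d' \<in> set_pmf (attach i k d1)"
    by auto
  from set_add_edge[OF assms(1) d1(1)] obtain v where v: "v < k" "d1 = d(v := Suc (d v))" by blast
  have s: "(\<Sum>u<k. d1 u) = (\<Sum>u<k. d u + (if u = v then 1 else 0))"
    using v by (intro sum.cong) auto
  have "(\<Sum>u<k. d1 u) = (\<Sum>u<k. d u) + 1" unfolding s sum.distrib using v by simp
  with Suc.IH[OF d1(2)] v show ?case by auto
qed

lemma pa_supp:
  assumes "d \<in> set_pmf (pa_outdeg m n)"
  shows "(\<forall>v\<ge>n. d v = 0) \<and> (\<Sum>v<Suc n. d v) = m * n"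
  using assms
proof (induction n arbitrary: d)
  case 0 thus ?case by simp
next
  case (Suc n)
  from Suc.prems obtain d0 where d0: "d0 \<in> set_pmf (pa_outdeg m n)" "d \<in> set_pmf (attach m (Suc n) d0)"
    by auto
  note IH = Suc.IH[OF d0(1)]
  note A = attach_supp[OF _ d0(2)]
  have z: "\<forall>v\<ge>Suc n. d v = 0" using IH A by auto
  have "(\<Sum>v<Suc (Suc n). d v) = (\<Sum>v<Suc n. d v)" using z by simp
  also have "\<dots> = m * n + m" using IH A by (simp del: sum.lessThan_Suc)
  finally show ?case using z by simp
qed

definition M :: "nat \<Rightarrow> nat \<Rightarrow> nat \<Rightarrow> nat pmf" where
  "M m j n = map_pmf (\<lambda>d. d j) (pa_outdeg m n)"

lemma M_base: "M m j j = return_pmf 0"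
proof -
  have "M m j j = map_pmf (\<lambda>_. 0) (pa_outdeg m j)"
    unfolding M_def by (intro map_pmf_cong refl) (use pa_supp in auto)
  thus ?thesis by (simp add: map_pmf_const)
qed

lemma M_step:
  assumes "j \<le> n"
  shows "M m j (Suc n) = bind_pmf (M m j n) (urn m (Suc (n + m * n)))"
proof -
  have "M m j (Suc n) = bind_pmf (pa_outdeg m n) (\<lambda>d. map_pmf (\<lambda>d. d j) (attach m (Suc n) d))"
    unfolding M_def by (simp add: map_bind_pmf)
  also have "\<dots> = bind_pmf (pa_outdeg m n) (\<lambda>d. urn m (Suc (n + m * n)) (d j))"
  proof (intro bind_pmf_cong refl)
    fix d assume d: "d \<in> set_pmf (pa_outdeg m n)"
    have "wt (Suc n) d = (\<Sum>v<Suc n. d v) + Suc n" unfolding wt_def sum.distrib by (simp del: sum.lessThan_Suc)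
    hence "wt (Suc n) d = Suc (n + m * n)" using pa_supp[OF d] by (simp del: sum.lessThan_Suc)
    thus "map_pmf (\<lambda>d. d j) (attach m (Suc n) d) = urn m (Suc (n + m * n)) (d j)"
      using attach_marg[of j "Suc n" m d] assms by simp
  qed
  also have "\<dots> = bind_pmf (M m j n) (urn m (Suc (n + m * n)))"
    unfolding M_def by (simp add: bind_map_pmf)
  finally show ?thesis .
qed



definition Q :: "nat \<Rightarrow> real \<Rightarrow> real \<Rightarrow> nat \<Rightarrow> real" where
  "Q i a c h = real (i choose h) * pochhammer a h * pochhammer c (i - h) / pochhammer (a + c) i"

lemma Q_0: "a + c \<noteq> 0 \<Longrightarrow> Q (Suc i) a c 0 = c / (a + c) * Q i a (c + 1) 0"
  unfolding Q_def by (simp add: pochhammer_rec field_simps)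

lemma Q_top: "a + c \<noteq> 0 \<Longrightarrow> Q (Suc i) a c (Suc i) = a / (a + c) * Q i (a + 1) c i"
  unfolding Q_def by (simp add: pochhammer_rec field_simps)

lemma Q_mid:
  assumes "a + c \<noteq> 0" "h < i"
  shows "Q (Suc i) a c (Suc h) = a / (a + c) * Q i (a + 1) c h + c / (a + c) * Q i a (c + 1) (Suc h)"
proof -
  obtain e where e: "i - h = Suc e" using assms(2) by (metis Suc_diff_Suc)
  have e2: "i - Suc h = e" using e by simp
  have P: "pochhammer (a + c) (Suc i) = (a + c) * pochhammer (a + c + 1) i"
    by (simp add: pochhammer_rec add.assoc)
  have "Q (Suc i) a c (Suc h) = real (Suc i choose Suc h) * pochhammer a (Suc h) * pochhammer c (Suc e) / pochhammer (a + c) (Suc i)"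
    unfolding Q_def using e by simp
  also have "\<dots> = (real (i choose h) + real (i choose Suc h)) * (a * pochhammer (a+1) h) * (c * pochhammer (c+1) e) / ((a + c) * pochhammer (a + c + 1) i)"
    unfolding P by (simp add: pochhammer_rec)
  also have "\<dots> = a / (a + c) * (real (i choose h) * pochhammer (a+1) h * (c * pochhammer (c+1) e) / pochhammer (a + c + 1) i)
       + c / (a + c) * (real (i choose Suc h) * (a * pochhammer (a+1) h) * pochhammer (c+1) e / pochhammer (a + c + 1) i)"
    using assms(1) by (simp add: field_simps) (simp add: add_divide_distrib)
  also have "\<dots> = a / (a + c) * Q i (a + 1) c h + c / (a + c) * Q i a (c + 1) (Suc h)"
    unfolding Q_def e e2 by (simp add: pochhammer_rec add_ac)
  finally show ?thesis .
qed

lemma urn_pmf: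
  "x < W \<Longrightarrow> pmf (urn i W x) y =
     (if x \<le> y \<and> y \<le> x + i then Q i (real x + 1) (real W - real x - 1) (y - x) else 0)"
proof (induction i arbitrary: W x y)
  case 0 thus ?case by (auto simp: Q_def indicator_def)
next
  case (Suc i)
  define a where "a = real x + 1"
  define c where "c = real W - real x - 1"
  have W: "real W = a + c" unfolding a_def c_def by simp
  have ac: "a + c \<noteq> 0" using Suc.prems W by simp
  have p0: "0 \<le> (real x + 1) / real W" by simp
  have p1: "(real x + 1) / real W \<le> 1" using Suc.prems by simp
  have a1: "real (Suc x) + 1 = a + 1" and c1: "real (Suc W) - real (Suc x) - 1 = c"
    and c2: "real (Suc W) - real x - 1 = c + 1" unfolding a_def c_def by simp_all
  have "pmf (urn (Suc i) W x) y = (real x + 1) / real W * pmf (urn i (Suc W) (Suc x)) y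
      + (1 - (real x + 1) / real W) * pmf (urn i (Suc W) x) y"
    using p0 p1 by (simp add: pmf_bind)
  also have "\<dots> = a / (a + c) * (if Suc x \<le> y \<and> y \<le> Suc x + i then Q i (a + 1) c (y - Suc x) else 0)
      + c / (a + c) * (if x \<le> y \<and> y \<le> x + i then Q i a (c + 1) (y - x) else 0)"
  proof -
    have "1 - (real x + 1) / real W = c / (a + c)" using ac W unfolding a_def c_def by (simp add: field_simps)
    moreover have "pmf (urn i (Suc W) (Suc x)) y = (if Suc x \<le> y \<and> y \<le> Suc x + i then Q i (a + 1) c (y - Suc x) else 0)"
      using Suc.IH[of "Suc x" "Suc W" y] Suc.prems unfolding a1 c1 by simp
    moreover have "pmf (urn i (Suc W) x) y = (if x \<le> y \<and> y \<le> x + i then Q i a (c + 1) (y - x) else 0)"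
      using Suc.IH[of x "Suc W" y] Suc.prems unfolding c2 a_def by simp
    ultimately show ?thesis unfolding W a_def by simp
  qed
  also have "\<dots> = (if x \<le> y \<and> y \<le> x + Suc i then Q (Suc i) a c (y - x) else 0)"
  proof (cases "x \<le> y \<and> y \<le> x + Suc i")
    case False thus ?thesis by auto
  next
    case True
    define h where "h = y - x"
    have h: "y = x + h" "h \<le> Suc i" using True unfolding h_def by auto
    show ?thesis
    proof (cases h)
      case 0 thus ?thesis using h Q_0[OF ac, of i] by simp
    next
      case (Suc h')
      show ?thesis
      proof (cases "h' = i")
        case True thus ?thesis using h Suc Q_top[OF ac, of i] by simp
      next
        case False
        hence "h' < i" using h Suc by simp
        thus ?thesis using h Suc Q_mid[OF ac, of h' i] by simp
      qed
    qed
  qed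
  finally show ?case unfolding a_def c_def .
qed



definition S :: "nat \<Rightarrow> nat \<Rightarrow> (nat \<Rightarrow> nat) set" where
  "S r T = {b \<in> {1..r} \<rightarrow>\<^sub>E {..T}. (\<Sum>l=1..r. b l) = T}"

definition A :: "nat \<Rightarrow> nat \<Rightarrow> nat \<Rightarrow> (nat \<Rightarrow> nat) \<Rightarrow> real" where
  "A m j r b = (\<Prod>l=1..r. real (m choose b l)) *
     (\<Prod>l=1..r. pochhammer (real ((m + 1) * j + (\<Sum>i=1..l-1. b i) + l - 1)) (b l))"

definition F :: "nat \<Rightarrow> nat \<Rightarrow> nat \<Rightarrow> nat \<Rightarrow> real" where
  "F m j r T = (\<Sum>b\<in>S r T. A m j r b)"

definition Den :: "nat \<Rightarrow> nat \<Rightarrow> nat \<Rightarrow> real" where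
  "Den m j r = (\<Prod>l<r. pochhammer (real ((m + 1) * (j + l) + 1)) m)"

lemma finite_S: "finite (S r T)"
  unfolding S_def by (rule finite_subset[OF _ finite_PiE[of "{1..r}" "\<lambda>_. {..T}"]]) auto

lemma fact_poch: "fact x * pochhammer (real x + 1) k = (fact (x + k) :: real)"
proof (induction k)
  case 0 thus ?case by simp
next
  case (Suc k)
  have "fact x * pochhammer (real x + 1) (Suc k) = (fact x * pochhammer (real x + 1) k) * (real x + 1 + real k)"
    by (simp add: pochhammer_Suc)
  also have "\<dots> = fact (x + k) * real (Suc (x + k))" using Suc by simp
  also have "\<dots> = fact (x + Suc k)" by (simp only: add_Suc_right fact_Suc) simp
  finally show ?case .
qed

lemma F_zero:
  assumes "T > m * r"
  shows "F m j r T = 0"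
  unfolding F_def
proof (intro sum.neutral ballI)
  fix b assume b: "b \<in> S r T"
  have "\<exists>l\<in>{1..r}. b l > m"
  proof (rule ccontr)
    assume "\<not> ?thesis"
    hence "\<forall>l\<in>{1..r}. b l \<le> m" by (auto simp: not_less)
    hence "(\<Sum>l=1..r. b l) \<le> (\<Sum>l=1..r. m)" by (intro sum_mono) auto
    thus False using b assms unfolding S_def by (simp add: mult.commute)
  qed
  then obtain l where l: "l \<in> {1..r}" "b l > m" by blast
  have "(\<Prod>l=1..r. real (m choose b l)) = 0"
    using l by (intro prod_zero) (auto intro: bexI[of _ l])
  thus "A m j r b = 0" unfolding A_def by simp
qed

lemma A_upd:
  assumes "b \<in> {1..r} \<rightarrow>\<^sub>E X"
  shows "A m j (Suc r) (b(Suc r := c)) =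
    A m j r b * (real (m choose c) * pochhammer (real ((m + 1) * j + (\<Sum>l=1..r. b l) + r)) c)"
proof -
  have s: "(\<Sum>i=1..l-1. (b(Suc r := c)) i) = (\<Sum>i=1..l-1. b i)" if "l \<in> {1..Suc r}" for l
    using that by (intro sum.cong) auto
  have p1: "(\<Prod>l=1..r. real (m choose (b(Suc r := c)) l)) = (\<Prod>l=1..r. real (m choose b l))"
    by (intro prod.cong) auto
  have p2: "(\<Prod>l=1..r. pochhammer (real ((m + 1) * j + (\<Sum>i=1..l-1. (b(Suc r := c)) i) + l - 1)) ((b(Suc r := c)) l))
      = (\<Prod>l=1..r. pochhammer (real ((m + 1) * j + (\<Sum>i=1..l-1. b i) + l - 1)) (b l))"
    by (intro prod.cong refl) (use s in auto)
  have s2: "(\<Sum>i=1..Suc r - 1. (b(Suc r := c)) i) = (\<Sum>l=1..r. b l)"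
    using s[of "Suc r"] by simp
  show ?thesis unfolding A_def using p1 p2 s2 by (simp add: algebra_simps)
qed

lemma S_to:
  assumes "c \<le> T" "b \<in> S r (T - c)"
  shows "b(Suc r := c) \<in> S (Suc r) T" "b (Suc r) = undefined"
proof -
  have b: "b \<in> {1..r} \<rightarrow>\<^sub>E {..T - c}" and bs: "(\<Sum>l=1..r. b l) = T - c"
    using assms unfolding S_def by auto
  show bu: "b (Suc r) = undefined" using b by (auto simp: PiE_def extensional_def)
  have "(\<Sum>l=1..Suc r. (b(Suc r := c)) l) = (\<Sum>l=1..r. (b(Suc r := c)) l) + c" by simp
  also have "(\<Sum>l=1..r. (b(Suc r := c)) l) = (\<Sum>l=1..r. b l)" by (intro sum.cong) auto
  finally have "(\<Sum>l=1..Suc r. (b(Suc r := c)) l) = T" using bs assms(1) by simp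
  moreover have "b(Suc r := c) \<in> {1..Suc r} \<rightarrow>\<^sub>E {..T}"
    using b assms(1) by (auto simp: PiE_def extensional_def Pi_def)
  ultimately show "b(Suc r := c) \<in> S (Suc r) T" unfolding S_def by simp
qed

lemma S_from:
  assumes "b \<in> S (Suc r) T"
  shows "b (Suc r) \<le> T" "b(Suc r := undefined) \<in> S r (T - b (Suc r))"
proof -
  have b: "b \<in> {1..Suc r} \<rightarrow>\<^sub>E {..T}" and bs: "(\<Sum>l=1..Suc r. b l) = T"
    using assms unfolding S_def by auto
  have bs2: "(\<Sum>l=1..r. b l) + b (Suc r) = T" using bs by simp
  thus "b (Suc r) \<le> T" by simp
  have le: "b l \<le> T - b (Suc r)" if "l \<in> {1..r}" for l
    using member_le_sum[of l "{1..r}" b] that bs2 by simp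
  have "(\<Sum>l=1..r. (b(Suc r := undefined)) l) = (\<Sum>l=1..r. b l)" by (intro sum.cong) auto
  hence "(\<Sum>l=1..r. (b(Suc r := undefined)) l) = T - b (Suc r)" using bs2 by simp
  moreover have "b(Suc r := undefined) \<in> {1..r} \<rightarrow>\<^sub>E {..T - b (Suc r)}"
    using b le by (auto simp: PiE_def extensional_def Pi_def)
  ultimately show "b(Suc r := undefined) \<in> S r (T - b (Suc r))" unfolding S_def by simp
qed

lemma F_Suc:
  "F m j (Suc r) T = (\<Sum>c\<le>T. F m j r (T - c) *
      (real (m choose c) * pochhammer (real ((m + 1) * j + (T - c) + r)) c))"
proof -
  have "(\<Sum>c\<le>T. F m j r (T - c) * (real (m choose c) * pochhammer (real ((m + 1) * j + (T - c) + r)) c))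
     = (\<Sum>c\<le>T. \<Sum>b\<in>S r (T - c). A m j r b * (real (m choose c) * pochhammer (real ((m + 1) * j + (T - c) + r)) c))"
    unfolding F_def by (simp add: sum_distrib_right)
  also have "\<dots> = (\<Sum>(c, b)\<in>(SIGMA c:{..T}. S r (T - c)). A m j r b * (real (m choose c) * pochhammer (real ((m + 1) * j + (T - c) + r)) c))"
    by (rule sum.Sigma) (auto simp: finite_S)
  also have "\<dots> = (\<Sum>b'\<in>S (Suc r) T. A m j (Suc r) b')"
  proof (rule sum.reindex_bij_witness[where i = "\<lambda>b'. (b' (Suc r), b'(Suc r := undefined))" and j = "\<lambda>(c, b). b(Suc r := c)"])
    fix cb assume cb: "cb \<in> (SIGMA c:{..T}. S r (T - c))"
    obtain c b where cb2: "cb = (c, b)" by force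
    have c: "c \<le> T" and b: "b \<in> S r (T - c)" using cb unfolding cb2 by auto
    note to = S_to[OF c b]
    show "((case cb of (c, b) \<Rightarrow> b(Suc r := c)) (Suc r), (case cb of (c, b) \<Rightarrow> b(Suc r := c))(Suc r := undefined)) = cb"
      unfolding cb2 using to(2) by auto
    show "(case cb of (c, b) \<Rightarrow> b(Suc r := c)) \<in> S (Suc r) T" unfolding cb2 using to(1) by simp
    have bs: "(\<Sum>l=1..r. b l) = T - c" using b unfolding S_def by auto
    have bp: "b \<in> {1..r} \<rightarrow>\<^sub>E {..T - c}" using b unfolding S_def by auto
    show "A m j (Suc r) (case cb of (c, b) \<Rightarrow> b(Suc r := c)) =
       (case cb of (c, b) \<Rightarrow> A m j r b * (real (m choose c) * pochhammer (real ((m + 1) * j + (T - c) + r)) c))"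
      unfolding cb2 using A_upd[OF bp, of m j c, unfolded bs] by simp
  next
    fix b' assume b': "b' \<in> S (Suc r) T"
    note fr = S_from[OF b']
    show "(case (b' (Suc r), b'(Suc r := undefined)) of (c, b) \<Rightarrow> b(Suc r := c)) = b'" by simp
    show "(b' (Suc r), b'(Suc r := undefined)) \<in> (SIGMA c:{..T}. S r (T - c))" using fr by simp
  qed
  finally show ?thesis unfolding F_def ..
qed



lemma S_0: "S 0 T = (if T = 0 then {\<lambda>_. undefined} else {})"
  unfolding S_def by auto

lemma main:
  "pmf (M m j (j + r)) x = (if x \<le> m * r then fact x * F m j r (m * r - x) / Den m j r else 0)"
proof (induction r arbitrary: x)
  case 0
  show ?case by (simp add: M_base F_def S_0 A_def Den_def indicator_def)
next
  case (Suc r)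
  define W where "W = Suc (j + r + m * (j + r))"
  have MS: "M m j (j + Suc r) = bind_pmf (M m j (j + r)) (urn m W)"
    unfolding W_def using M_step[of j "j + r" m] by simp
  define g where "g x y = fact x * F m j r (m * r - x) / Den m j r *
     (if x \<le> y \<and> y \<le> x + m then Q m (real x + 1) (real W - real x - 1) (y - x) else 0)" for x y
  have step: "pmf (M m j (j + Suc r)) y = (\<Sum>x\<le>m * r. g x y)" for y
  proof -
    have "pmf (M m j (j + Suc r)) y = (\<integral>x. pmf (urn m W x) y \<partial>measure_pmf (M m j (j + r)))"
      unfolding MS pmf_bind ..
    also have "\<dots> = (\<Sum>x\<le>m * r. pmf (M m j (j + r)) x *\<^sub>R pmf (urn m W x) y)"
    proof (rule integral_measure_pmf)
      show "finite {..m * r}" by simp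
      fix a assume "a \<in> set_pmf (M m j (j + r))"
      hence "pmf (M m j (j + r)) a \<noteq> 0" by (simp add: set_pmf_iff)
      thus "a \<in> {..m * r}" unfolding Suc.IH by (auto split: if_splits)
    qed
    also have "\<dots> = (\<Sum>x\<le>m * r. g x y)"
    proof (intro sum.cong refl)
      fix x assume x: "x \<in> {..m * r}"
      have "x < W" using x unfolding W_def by (auto simp: algebra_simps intro: le_imp_less_Suc trans_le_add2)
      thus "pmf (M m j (j + r)) x *\<^sub>R pmf (urn m W x) y = g x y"
        unfolding Suc.IH urn_pmf[OF \<open>x < W\<close>] g_def using x by simp
    qed
    finally show ?thesis .
  qed
  show ?case
  proof (cases "x \<le> m * Suc r")
    case False
    have "g y x = 0" if "y \<le> m * r" for y using False that unfolding g_def by auto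
    thus ?thesis unfolding step using False by simp
  next
    case True
    define T' where "T' = m * r + m - x"
    define h where "h c = fact x * (F m j r (T' - c) * (real (m choose c) *
        pochhammer (real ((m + 1) * j + (T' - c) + r)) c)) / (Den m j r * pochhammer (real W) m)" for c
    have DS: "Den m j (Suc r) = Den m j r * pochhammer (real W) m"
      unfolding Den_def W_def by (simp add: algebra_simps)
    have rhs: "fact x * F m j (Suc r) (m * Suc r - x) / Den m j (Suc r) = (\<Sum>c\<le>T'. h c)"
      unfolding DS F_Suc h_def T'_def by (simp add: sum_distrib_left sum_divide_distrib algebra_simps)
    define G where "G = {z. z \<le> m * r \<and> z \<le> x \<and> x \<le> z + m}"
    define H where "H = {c. c \<le> T' \<and> c \<le> m \<and> m \<le> x + c}"
    have lhsG: "(\<Sum>z\<le>m * r. g z x) = (\<Sum>z\<in>G. g z x)"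
      by (rule sum.mono_neutral_right) (auto simp: G_def g_def)
    have rhsH: "(\<Sum>c\<le>T'. h c) = (\<Sum>c\<in>H. h c)"
    proof (rule sum.mono_neutral_right)
      show "finite {..T'}" by simp
      show "H \<subseteq> {..T'}" by (auto simp: H_def)
      show "\<forall>c\<in>{..T'} - H. h c = 0"
      proof
        fix c assume c: "c \<in> {..T'} - H"
        show "h c = 0"
        proof (cases "c \<le> m")
          case False thus ?thesis unfolding h_def by simp
        next
          case True
          hence "x + c < m" using c by (auto simp: H_def)
          hence "T' - c > m * r" unfolding T'_def by simp
          thus ?thesis unfolding h_def by (simp add: F_zero)
        qed
      qed
    qed
    have GH: "(\<Sum>z\<in>G. g z x) = (\<Sum>c\<in>H. h c)"
    proof (rule sum.reindex_bij_witness[where j = "\<lambda>z. z + m - x" and i = "\<lambda>c. x + c - m"])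
      fix z assume z: "z \<in> G"
      hence z1: "z \<le> m * r" "z \<le> x" "x \<le> z + m" by (auto simp: G_def)
      show "x + (z + m - x) - m = z" using z1 by simp
      show "z + m - x \<in> H" using z1 True unfolding H_def T'_def by auto
      define c where "c = z + m - x"
      have e1: "T' - c = m * r - z" unfolding T'_def c_def using z1 by simp
      have e2: "m - (x - z) = c" unfolding c_def using z1 by simp
      have e3: "(m choose (x - z)) = (m choose c)"
        using binomial_symmetric[of "x - z" m] e2 z1 by simp
      have e4: "fact z * pochhammer (real z + 1) (x - z) = (fact x :: real)"
        using fact_poch[of z "x - z"] z1 by simp
      have e5: "real W - real z - 1 = real ((m + 1) * j + (m * r - z) + r)"
        unfolding W_def using z1 by (simp add: algebra_simps of_nat_diff)
      have e6: "real z + 1 + real ((m + 1) * j + (m * r - z) + r) = real W"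
        unfolding e5[symmetric] by simp
      have "g z x = fact z * F m j r (m * r - z) / Den m j r *
          (real (m choose c) * pochhammer (real z + 1) (x - z) * pochhammer (real ((m + 1) * j + (m * r - z) + r)) c / pochhammer (real W) m)"
        unfolding g_def Q_def e2 e3 e5 e6 using z1 by simp
      also have "\<dots> = (fact z * pochhammer (real z + 1) (x - z)) * (F m j r (m * r - z) * (real (m choose c) *
          pochhammer (real ((m + 1) * j + (m * r - z) + r)) c)) / (Den m j r * pochhammer (real W) m)"
        by (simp add: field_simps)
      also have "\<dots> = h c" unfolding e4 h_def e1 ..
      finally show "h (z + m - x) = g z x" unfolding c_def ..
    next
      fix c assume c: "c \<in> H"
      hence c1: "c \<le> T'" "c \<le> m" "m \<le> x + c" by (auto simp: H_def)
      show "x + c - m + m - x = c" using c1 by simp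
      show "x + c - m \<in> G" using c1 True unfolding G_def T'_def by auto
    qed
    show ?thesis unfolding step lhsG GH rhsH[symmetric] rhs[symmetric] using True by simp
  qed
qed



lemma A_cond_zero:
  assumes "1 \<le> r" "b 1 > min m ((m + 1) * j)"
  shows "A m j r b = 0"
proof (cases "j = 0")
  case True
  have "(\<Prod>l=1..r. pochhammer (real ((m + 1) * j + (\<Sum>i=1..l-1. b i) + l - 1)) (b l)) = 0"
    using assms True by (intro prod_zero bexI[of _ 1]) (auto simp: pochhammer_0_left)
  thus ?thesis unfolding A_def by simp
next
  case False
  have "m \<le> (m + 1) * j" using False by (cases j) auto
  hence "min m ((m + 1) * j) = m" by (simp add: min_def)
  hence "(\<Prod>l=1..r. real (m choose b l)) = 0"
    using assms by (intro prod_zero bexI[of _ 1]) auto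
  thus ?thesis unfolding A_def by simp
qed

lemma set_sum_eq:
  fixes Ti :: int
  assumes "Ti \<ge> 0"
  shows "(\<Sum>b \<in> {b \<in> {1..r} \<rightarrow>\<^sub>E {..nat Ti}. int (\<Sum>l=1..r. b l) = Ti \<and>
              (r \<ge> 1 \<longrightarrow> b 1 \<le> min m ((m + 1) * j))}. A m j r b) = F m j r (nat Ti)"
proof -
  define P where "P b = (r \<ge> 1 \<longrightarrow> b 1 \<le> min m ((m + 1) * (j::nat)))" for b :: "nat \<Rightarrow> nat"
  have eqv: "(int (\<Sum>l=1..r. b l) = Ti) = ((\<Sum>l=1..r. b l) = nat Ti)" for b :: "nat \<Rightarrow> nat"
    using assms by linarith
  have set: "{b \<in> {1..r} \<rightarrow>\<^sub>E {..nat Ti}. int (\<Sum>l=1..r. b l) = Ti \<and> P b} = {b \<in> S r (nat Ti). P b}"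
    unfolding S_def eqv by blast
  have "(\<Sum>b \<in> {b \<in> S r (nat Ti). P b}. A m j r b) = (\<Sum>b \<in> S r (nat Ti). A m j r b)"
  proof (rule sum.mono_neutral_left)
    show "finite (S r (nat Ti))" by (rule finite_S)
    show "{b \<in> S r (nat Ti). P b} \<subseteq> S r (nat Ti)" by blast
    show "\<forall>b\<in>S r (nat Ti) - {b \<in> S r (nat Ti). P b}. A m j r b = 0"
    proof
      fix b assume "b \<in> S r (nat Ti) - {b \<in> S r (nat Ti). P b}"
      hence "\<not> P b" by blast
      hence "1 \<le> r" "b 1 > min m ((m + 1) * j)" unfolding P_def by auto
      thus "A m j r b = 0" by (rule A_cond_zero)
    qed
  qed
  thus ?thesis using set unfolding P_def F_def by simp
qed

lemma set_empty:
  fixes Ti :: int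
  assumes "Ti < 0"
  shows "{b \<in> {1..r} \<rightarrow>\<^sub>E {..nat Ti}. int (\<Sum>l=1..r. b l) = Ti \<and> P b} = {}"
  using assms by auto

theorem theorem3:
  fixes m n j :: nat and d :: int
  assumes "m \<ge> 1" and "j \<le> n"
  shows "pmf (pa_degree m n j) d =
    real (fact (nat (d - int m * (1 - kdelta j 0)))) *
    (\<Sum>b \<in> {b \<in> {1..n-j} \<rightarrow>\<^sub>E {..nat (int m * (int (n - j) + 1 - kdelta j 0) - d)}.
              int (\<Sum>r=1..n-j. b r) = int m * (int (n - j) + 1 - kdelta j 0) - d \<and>
              (n - j \<ge> 1 \<longrightarrow> b 1 \<le> min m ((m + 1) * j))}.
       (\<Prod>r=1..n-j. real (m choose b r)) *
       (\<Prod>r=1..n-j. pochhammer (real ((m + 1) * j + (\<Sum>l=1..r-1. b l) + r - 1)) (b r)) /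
       (\<Prod>r<n-j. pochhammer (real ((m + 1) * (j + r) + 1)) m))"
proof -
  define r where "r = n - j"
  have n: "n = j + r" unfolding r_def using assms by simp
  define off where "off = int m * (1 - kdelta j 0)"
  define Ti where "Ti = int m * (int r + 1 - kdelta j 0) - d"
  have Ti: "Ti = int m * int r + off - d" unfolding Ti_def off_def by (simp add: algebra_simps)
  have off0: "off \<ge> 0" unfolding off_def kdelta_def by simp
  have sumeq: "(\<Sum>b \<in> {b \<in> {1..r} \<rightarrow>\<^sub>E {..nat Ti}. int (\<Sum>l=1..r. b l) = Ti \<and>
              (r \<ge> 1 \<longrightarrow> b 1 \<le> min m ((m + 1) * j))}.
       (\<Prod>l=1..r. real (m choose b l)) *
       (\<Prod>l=1..r. pochhammer (real ((m + 1) * j + (\<Sum>i=1..l-1. b i) + l - 1)) (b l)) / Den m j r)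
     = (if Ti \<ge> 0 then F m j r (nat Ti) / Den m j r else 0)"
  proof (cases "Ti \<ge> 0")
    case True
    show ?thesis using set_sum_eq[OF True, where r=r and m=m and j=j] True
      unfolding A_def sum_divide_distrib[symmetric] by simp
  next
    case False
    thus ?thesis using set_empty[of Ti r] by simp
  qed
  have degm: "pa_degree m n j = map_pmf (\<lambda>x. int x + off) (M m j n)"
    unfolding pa_degree_def M_def off_def kdelta_def by (simp add: map_pmf_comp)
  have inj: "inj (\<lambda>x::nat. int x + off)" by (rule injI) simp
  have lhs: "pmf (pa_degree m n j) d = (if d \<ge> off then pmf (M m j n) (nat (d - off)) else 0)"
  proof (cases "d \<ge> off")
    case True
    have e: "int (nat (d - off)) + off = d" using True by simp
    have "pmf (pa_degree m n j) d = pmf (map_pmf (\<lambda>x. int x + off) (M m j n)) (int (nat (d - off)) + off)"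
      unfolding degm e ..
    also have "\<dots> = pmf (M m j n) (nat (d - off))" by (rule pmf_map_inj'[OF inj])
    finally show ?thesis using True by simp
  next
    case False
    thus ?thesis unfolding degm by (intro trans[OF pmf_map_outside]) auto
  qed
  have main': "pmf (pa_degree m n j) d = real (fact (nat (d - off))) * (if Ti \<ge> 0 then F m j r (nat Ti) / Den m j r else 0)"
  proof (cases "d \<ge> off")
    case True
    define x where "x = nat (d - off)"
    have dx: "d - off = int x" unfolding x_def using True by simp
    show ?thesis
    proof (cases "x \<le> m * r")
      case True
      have "Ti = int m * int r - int x" using Ti dx by simp
      also have "\<dots> = int (m * r - x)" using True by (simp add: of_nat_diff)
      finally have TT: "Ti = int (m * r - x)" .
      have "Ti \<ge> 0" "nat Ti = m * r - x" unfolding TT by simp_all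
      thus ?thesis unfolding lhs unfolding n main using \<open>d \<ge> off\<close> True x_def by simp
    next
      case False
      have "Ti < 0" using Ti dx False
        by (metis diff_diff_eq2 diff_less_0_iff_less not_le of_nat_less_iff of_nat_mult)
      thus ?thesis unfolding lhs unfolding n main using \<open>d \<ge> off\<close> False x_def by simp
    qed
  next
    case False
    have "Ti > int m * int r" using Ti False by simp
    hence "int (m * r) < Ti" by simp
    hence "nat Ti > m * r" by linarith
    have "Ti \<ge> 0" using \<open>Ti > int m * int r\<close> by (smt (verit) of_nat_0_le_iff of_nat_mult)
    thus ?thesis unfolding lhs using False F_zero[OF \<open>nat Ti > m * r\<close>] by simp
  qed
  show ?thesis unfolding r_def[symmetric] off_def[symmetric] Ti_def[symmetric] Den_def[symmetric] sumeq main' ..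
qed

end
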